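(* Let $A\subset\mathbb R^2$ be the convex quadrilateral with counterclockwise vertices $\mathbf v_1=(0,0)$, $\mathbf v_2=(1,0)$, $\mathbf v_3=(0,1)$, $\mathbf v_4=(-1,\tfrac12)$. Let $a\in[-1,1]$ and $$b=\frac{-12-13a+\sqrt{25^2+11\cdot 13\,(1-a^2)}}{4\cdot 13}.$$ Then the point $(a,b)$ lies on the equator of $A$, i.e. $(a,b)\in A$ and the Gibbs coordinates of $(a,b)$ with respect to $\mathbf v_1,\dots,\mathbf v_4$ coincide with its Wachspress coordinates.
   Context: Signed area: $A(\mathbf u_0,\mathbf u_1,\mathbf u_2)=\tfrac12\det[\mathbf u_1-\mathbf u_0,\mathbf u_2-\mathbf u_0]$. Wachspress coordinates of a point $\mathbf x$ in the interior of a convex polygon with counterclockwise vertices $\mathbf v_1,\dots,\mathbf v_n$ (indices mod $n$): weights $w_i(\mathbf x)=A(\mathbf v_{i-1},\mathbf v_i,\mathbf v_{i+1})/\big(A(\mathbf v_{i-1},\mathbf v_i,\mathbf x)\,A(\mathbf x,\mathbf v_i,\mathbf v_{i+1})\big)$, and coordinates $w(\mathbf x,\mathbf v_i)=w_i(\mathbf x)/\sum_j w_j(\mathbf x)$. For $\mathbf x$ on an edge $[\mathbf v_j,\mathbf v_{j+1}]$ the Wachspress coordinates are the barycentric coordinates of $\mathbf x$ with respect to $\mathbf v_j,\mathbf v_{j+1}$ and $0$ for all other vertices. Gibbs coordinates of $\mathbf x$: the unique probability distribution $(p_i)$ on $\{\mathbf v_1,\dots,\mathbf v_n\}$ with $\sum_i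 p_i\mathbf v_i=\mathbf x$ that maximizes the entropy $-\sum_i p_i\log p_i$ (with $0\log0=0$). The equator is the set of points of $A$ where Gibbs and Wachspress coordinates coincide. *)

theory Defs
  imports "HOL-Analysis.Analysis"
begin

type_synonym pt = "real \<times> real"

definition sarea :: "pt \<Rightarrow> pt \<Rightarrow> pt \<Rightarrow> real" where
  "sarea u0 u1 u2 = ((fst u1 - fst u0) * (snd u2 - snd u0)
                    - (snd u1 - snd u0) * (fst u2 - fst u0)) / 2"

text \<open>A polygon is given by n vertices v 0, ..., v (n-1) (counterclockwise);
  indices are taken mod n.\<close>
definition nxt :: "nat \<Rightarrow> nat \<Rightarrow> nat" where "nxt n i = (i + 1) mod n"
definition prv :: "nat \<Rightarrow> nat \<Rightarrow> nat" where "prv n i = (i + n - 1) mod n"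

definition polygon :: "(nat \<Rightarrow> pt) \<Rightarrow> nat \<Rightarrow> pt set" where
  "polygon v n = convex hull (v ` {0..<n})"

definition wach_weight :: "(nat \<Rightarrow> pt) \<Rightarrow> nat \<Rightarrow> pt \<Rightarrow> nat \<Rightarrow> real" where
  "wach_weight v n x i =
     sarea (v (prv n i)) (v i) (v (nxt n i))
     / (sarea (v (prv n i)) (v i) x * sarea x (v i) (v (nxt n i)))"

definition wachspress :: "(nat \<Rightarrow> pt) \<Rightarrow> nat \<Rightarrow> pt \<Rightarrow> nat \<Rightarrow> real" where
  "wachspress v n x i =
     (if x \<in> interior (polygon v n) then
        wach_weight v n x i / (\<Sum>j<n. wach_weight v n x j)
      else if x \<in> closed_segment (v i) (v (nxt n i)) then
        dist x (v (nxt n i)) / dist (v i) (v (nxt n i))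
      else if x \<in> closed_segment (v (prv n i)) (v i) then
        dist x (v (prv n i)) / dist (v (prv n i)) (v i)
      else 0)"

definition feasible :: "(nat \<Rightarrow> pt) \<Rightarrow> nat \<Rightarrow> pt \<Rightarrow> (nat \<Rightarrow> real) \<Rightarrow> bool" where
  "feasible v n x p \<longleftrightarrow> (\<forall>i<n. 0 \<le> p i) \<and> (\<forall>i\<ge>n. p i = 0)
     \<and> (\<Sum>i<n. p i) = 1 \<and> (\<Sum>i<n. p i *\<^sub>R v i) = x"

text \<open>Entropy, with 0 log 0 = 0 (note ln 0 = 0 in Isabelle).\<close>
definition entropy :: "nat \<Rightarrow> (nat \<Rightarrow> real) \<Rightarrow> real" where
  "entropy n p = - (\<Sum>i<n. p i * ln (p i))"

definition gibbs :: "(nat \<Rightarrow> pt) \<Rightarrow> nat \<Rightarrow> pt \<Rightarrow> nat \<Rightarrow> real" where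
  "gibbs v n x = (THE p. feasible v n x p \<and>
                     (\<forall>q. feasible v n x q \<longrightarrow> entropy n q \<le> entropy n p))"

definition quadV :: "nat \<Rightarrow> pt" where
  "quadV i = (if i = 0 then (0,0) else if i = 1 then (1,0)
              else if i = 2 then (0,1) else (-1, 1/2))"

end

theory Submission
  imports Defs
begin


lemma g_nonneg:
  fixes p q :: real
  assumes "0 < p" "0 \<le> q"
  shows "0 \<le> q * ln q - q * ln p - q + p"
proof (cases "q = 0")
  case True then show ?thesis using assms by simp
next
  case False
  then have "0 < q" using assms by simp
  have "ln p - ln q \<le> (p - q) / q" using ln_diff_le[OF assms(1) \<open>0<q\<close>] .
  then have "q * (ln p - ln q) \<le> p - q" using \<open>0<q\<close> by (simp add: field_simps)
  then show ?thesis by (simp add: algebra_simps)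
qed

lemma g_zero:
  fixes p q :: real
  assumes "0 < p" "0 \<le> q" "q * ln q - q * ln p - q + p = 0"
  shows "q = p"
proof (rule ccontr)
  assume ne: "q \<noteq> p"
  show False
  proof (cases "q = 0")
    case True then show ?thesis using assms by simp
  next
    case False
    then have "0 < q" using assms by simp
    have "ln p - ln q < (p - q) / q" using ln_diff_less[OF assms(1) \<open>0<q\<close>] ne by simp
    then have "q * (ln p - ln q) < p - q" using \<open>0<q\<close> by (simp add: field_simps)
    then show ?thesis using assms(3) by (simp add: algebra_simps)
  qed
qed

lemma gibbs_char:
  assumes fp: "feasible v n x p" and pos: "\<forall>i<n. 0 < p i"
    and lin: "\<And>q. feasible v n x q \<Longrightarrow> (\<Sum>i<n. q i * ln (p i)) = (\<Sum>i<n. p i * ln (p i))"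
  shows "gibbs v n x = p"
proof -
  have diff: "entropy n p - entropy n q = (\<Sum>i<n. q i * ln (q i) - q i * ln (p i) - q i + p i)"
    if fq: "feasible v n x q" for q
  proof -
    have "(\<Sum>i<n. q i * ln (q i) - q i * ln (p i) - q i + p i)
      = (\<Sum>i<n. q i * ln (q i)) - (\<Sum>i<n. q i * ln (p i)) - (\<Sum>i<n. q i) + (\<Sum>i<n. p i)"
      by (simp add: sum.distrib sum_subtractf)
    also have "\<dots> = (\<Sum>i<n. q i * ln (q i)) - (\<Sum>i<n. p i * ln (p i))"
      using lin[OF fq] fp fq by (simp add: feasible_def)
    finally show ?thesis by (simp add: entropy_def)
  qed
  have gnn: "0 \<le> (\<Sum>i<n. q i * ln (q i) - q i * ln (p i) - q i + p i)" if fq: "feasible v n x q" for q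
    using fq pos by (intro sum_nonneg) (auto intro!: g_nonneg simp: feasible_def)
  show ?thesis
    unfolding gibbs_def
  proof (rule the_equality)
    show "feasible v n x p \<and> (\<forall>q. feasible v n x q \<longrightarrow> entropy n q \<le> entropy n p)"
      using fp diff gnn by force
  next
    fix q assume H: "feasible v n x q \<and> (\<forall>r. feasible v n x r \<longrightarrow> entropy n r \<le> entropy n q)"
    then have fq: "feasible v n x q" and le: "entropy n p \<le> entropy n q" using fp by auto
    have s0: "(\<Sum>i<n. q i * ln (q i) - q i * ln (p i) - q i + p i) = 0"
      using diff[OF fq] gnn[OF fq] le by linarith
    have nn: "\<And>i. i \<in> {..<n} \<Longrightarrow> 0 \<le> q i * ln (q i) - q i * ln (p i) - q i + p i"
      using fq pos by (auto intro!: g_nonneg simp: feasible_def)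
    have "\<forall>i\<in>{..<n}. q i * ln (q i) - q i * ln (p i) - q i + p i = 0"
      using s0 by (subst (asm) sum_nonneg_eq_0_iff) (use nn in auto)
    then have "\<forall>i<n. q i = p i" using fq pos unfolding feasible_def
      by (metis g_zero lessThan_iff)
    moreover have "\<forall>i\<ge>n. q i = p i" using fq fp by (simp add: feasible_def)
    ultimately show "q = p" by (metis not_le ext)
  qed
qed



lemma sum4: "(\<Sum>i<4::nat. f i) = f 0 + f 1 + f 2 + (f 3 :: 'a::comm_monoid_add)"
  by (simp add: eval_nat_numeral add.assoc)

lemma sumR4: "(\<Sum>i<4. q i *\<^sub>R quadV i) = (q 1 - q 3, q 2 + q 3 / 2)"
  by (simp add: sum4 quadV_def)

lemma feas_quad: "feasible quadV 4 x q \<longleftrightarrow> (\<forall>i<4. 0 \<le> q i) \<and> (\<forall>i\<ge>4. q i = 0) \<and>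
   q 0 + q 1 + q 2 + q 3 = 1 \<and> x = (q 1 - q 3, q 2 + q 3 / 2)"
  unfolding feasible_def sumR4 sum4 by auto

lemma in_poly:
  assumes "0 \<le> q0" "0 \<le> q1" "0 \<le> q2" "0 \<le> q3" "q0 + q1 + q2 + q3 = 1"
  shows "(q1 - q3, q2 + q3 / 2) \<in> polygon quadV 4"
proof -
  define q where "q = (\<lambda>i::nat. if i = 0 then q0 else if i = 1 then q1 else if i = 2 then q2 else q3)"
  have "(\<Sum>i<4. q i *\<^sub>R quadV i) \<in> convex hull (quadV ` {0..<4})"
    by (rule convex_sum) (use assms in \<open>auto simp: q_def sum4 intro: hull_inc\<close>)
  then show ?thesis by (simp add: polygon_def sumR4 q_def)
qed

lemma lin_quad:
  assumes "feasible quadV 4 (a, b) q" "2 * L 3 = 3 * L 0 - 2 * L 1 + L 2"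
  shows "(\<Sum>i<4. q i * L i) = (1 - a - b) * L 0 + a * L 1 + b * L 2"
proof -
  have h: "q 0 + q 1 + q 2 + q 3 = 1" and ea: "a = q 1 - q 3" and eb: "b = q 2 + q 3 / 2"
    using assms(1) by (auto simp: feas_quad)
  have eL: "L 3 = (3 * L 0 - 2 * L 1 + L 2) / 2" using assms(2) by simp
  have eq: "q 0 = 1 - q 1 - q 2 - q 3" using h by simp
  show ?thesis unfolding sum4 ea eb eL eq by (simp add: field_simps)
qed

lemma mult_nonzero: "(x::real) \<noteq> 0 \<Longrightarrow> y \<noteq> 0 \<Longrightarrow> x * y \<noteq> 0" by simp

lemma W:
  fixes a b :: real
  assumes "b \<noteq> 0" "1 - a - b \<noteq> 0" "1 - b + a/2 \<noteq> 0" "b + a/2 \<noteq> 0"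
  shows "wach_weight quadV 4 (a,b) 0 = 1 / ((b + a/2) * b)"
    "wach_weight quadV 4 (a,b) 1 = 2 / (b * (1 - a - b))"
    "wach_weight quadV 4 (a,b) 2 = 3 / ((1 - a - b) * (1 - b + a/2))"
    "wach_weight quadV 4 (a,b) 3 = 2 / ((1 - b + a/2) * (b + a/2))"
  using assms mult_nonzero[OF assms(4) assms(1)] by (auto simp: wach_weight_def sarea_def quadV_def prv_def nxt_def field_simps)


lemma interior_case:
  fixes a b :: real
  assumes a1: "-1 < a" and a2: "a < 1"
    and bdef: "b = (-12 - 13*a + sqrt (25^2 + 11*13*(1 - a^2))) / (4*13)"
  shows "(a, b) \<in> polygon quadV 4 \<and>
         (\<forall>i<4. gibbs quadV 4 (a, b) i = wachspress quadV 4 (a, b) i)"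
proof -
  define s where "s = sqrt (768 - 143 * a^2)"
  have "(25::real)^2 + 11*13*(1 - a^2) = 768 - 143 * a^2" by (simp add: algebra_simps)
  then have bs: "b = (s - 12 - 13 * a) / 52" using bdef by (simp add: s_def)
  have p0: "0 < (1 - a) * (1 + a)" using a1 a2 by (intro mult_pos_pos) auto
  have asq: "a^2 < 1" using p0 by (simp add: power2_eq_square algebra_simps)
  have h143: "143 * a^2 \<le> 768" using asq by linarith
  then have s0: "0 \<le> s" by (simp add: s_def)
  from h143 have ss: "s^2 = 768 - 143 * a^2" unfolding s_def by simp
  have p1: "0 < (a + 2) * (1 - a)" using a1 a2 by (intro mult_pos_pos) auto
  have p2: "0 < (2 - a) * (1 - a)" using a1 a2 by (intro mult_pos_pos) auto
  have p3: "0 < (a + 1) * (a + 2)" using a1 a2 by (intro mult_pos_pos) auto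
  have p4: "0 < (2 - a) * (a + 1)" using a1 a2 by (intro mult_pos_pos) auto
  have i1: "12 + 13 * a < s"
    by (rule power2_less_imp_less[OF _ s0]) (use p1 ss in \<open>simp add: power2_eq_square algebra_simps\<close>)
  have i2: "s < 64 - 39 * a"
    by (rule power2_less_imp_less) (use p2 ss a2 in \<open>simp_all add: power2_eq_square algebra_simps\<close>)
  have i3: "s < 64 + 39 * a"
    by (rule power2_less_imp_less) (use p3 ss a1 in \<open>simp_all add: power2_eq_square algebra_simps\<close>)
  have i4: "12 - 13 * a < s"
    by (rule power2_less_imp_less[OF _ s0]) (use p4 ss in \<open>simp add: power2_eq_square algebra_simps\<close>)
  define e0 where "e0 = b"
  define e1 where "e1 = 1 - a - b"
  define e2 where "e2 = 1 - b + a/2"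
  define e3 where "e3 = b + a/2"
  have e0p: "0 < e0" using i1 bs by (simp add: e0_def)
  have e1p: "0 < e1" using i2 bs by (simp add: e1_def)
  have e2p: "0 < e2" using i3 bs by (simp add: e2_def)
  have e3p: "0 < e3" using i4 bs by (simp add: e3_def)
  have quad: "26 * b^2 + (13 * a + 12) * b + 3 * a^2 + 3 * a - 6 = 0"
  proof -
    have "s = 52 * b + 12 + 13 * a" using bs by simp
    then have "(52 * b + 12 + 13 * a)^2 = 768 - 143 * a^2" using ss by simp
    then show ?thesis by (simp add: power2_eq_square algebra_simps)
  qed
  have key: "16 * e0 * e3 = 3 * e1 * e2"
    using quad by (simp add: e0_def e1_def e2_def e3_def power2_eq_square algebra_simps)
  define U where "U = e1*e2 + 2*e2*e3 + 3*e3*e0 + 2*e0*e1"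
  have Up: "0 < U" using e0p e1p e2p e3p by (simp add: U_def add_pos_pos mult_pos_pos)
  define p where "p = (\<lambda>i::nat. if i = 0 then e1*e2/U else if i = 1 then 2*e2*e3/U
     else if i = 2 then 3*e3*e0/U else if i = 3 then 2*e0*e1/U else 0)"
  have pv: "p 0 = e1*e2/U" "p 1 = 2*e2*e3/U" "p 2 = 3*e3*e0/U" "p 3 = 2*e0*e1/U"
    by (simp_all add: p_def)
  have i4: "\<And>i::nat. i < 4 \<Longrightarrow> i = 0 \<or> i = 1 \<or> i = 2 \<or> i = 3" by auto
  have pp: "0 < p 0" "0 < p 1" "0 < p 2" "0 < p 3"
    using e0p e1p e2p e3p Up by (simp_all add: p_def)
  have ppos: "\<forall>i<4. 0 < p i" using pp i4 by auto
  have lin1: "2*e2*e3 - 2*e0*e1 = a * U"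
    unfolding U_def e0_def e1_def e2_def e3_def by (simp add: field_simps)
  have lin2: "3*e3*e0 + e0*e1 = b * U"
    unfolding U_def e0_def e1_def e2_def e3_def by (simp add: field_simps)
  have f1: "p 0 + p 1 + p 2 + p 3 = 1"
  proof -
    have "p 0 + p 1 + p 2 + p 3 = (e1*e2 + 2*e2*e3 + 3*e3*e0 + 2*e0*e1) / U"
      by (simp add: p_def add_divide_distrib)
    then show ?thesis using Up by (simp add: U_def)
  qed
  have f2: "p 1 - p 3 = a"
  proof -
    have "p 1 - p 3 = (2*e2*e3 - 2*e0*e1) / U" by (simp add: p_def diff_divide_distrib)
    then show ?thesis using Up lin1 by simp
  qed
  have f3: "p 2 + p 3 / 2 = b"
  proof -
    have "p 2 + p 3 / 2 = (3*e3*e0 + e0*e1) / U" by (simp add: p_def add_divide_distrib)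
    then show ?thesis using Up lin2 by simp
  qed
  have fp: "feasible quadV 4 (a, b) p"
    unfolding feas_quad using ppos f1 f2 f3 by (auto simp: p_def less_imp_le)
  have num: "(2*e0*e1)^2*(2*e2*e3)^2 = (e1*e2)^3*(3*e3*e0)"
  proof -
    have "(2*e0*e1)^2*(2*e2*e3)^2 = (16*e0*e3)*(e0*e1^2*e2^2*e3)" by (simp add: power2_eq_square power3_eq_cube algebra_simps)
    also have "\<dots> = (3*e1*e2)*(e0*e1^2*e2^2*e3)" by (simp only: key)
    also have "\<dots> = (e1*e2)^3*(3*e3*e0)" by (simp add: power2_eq_square power3_eq_cube algebra_simps)
    finally show ?thesis .
  qed
  have rel: "p 3^2 * p 1^2 = p 0^3 * p 2"
  proof -
    have "p 3^2 * p 1^2 = ((2*e0*e1)^2*(2*e2*e3)^2) / U^4"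
      by (simp add: p_def power_divide eval_nat_numeral)
    also have "\<dots> = ((e1*e2)^3*(3*e3*e0)) / U^4" by (simp only: num)
    also have "\<dots> = p 0^3 * p 2"
      by (simp add: p_def power_divide eval_nat_numeral)
    finally show ?thesis .
  qed
  have lnrel: "2 * ln (p 3) = 3 * ln (p 0) - 2 * ln (p 1) + ln (p 2)"
  proof -
    have "ln (p 3^2 * p 1^2) = ln (p 0^3 * p 2)" using rel by simp
    then show ?thesis using pp by (simp add: ln_mult ln_realpow)
  qed
  have G: "gibbs quadV 4 (a, b) = p"
  proof (rule gibbs_char[OF fp ppos])
    fix q assume "feasible quadV 4 (a, b) q"
    then show "(\<Sum>i<4. q i * ln (p i)) = (\<Sum>i<4. p i * ln (p i))"
      using lin_quad[where L="\<lambda>i. ln (p i)", OF _ lnrel] fp by simp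
  qed
  have inpoly: "\<And>q0 q1 q2 q3 x y. 0 \<le> q0 \<Longrightarrow> 0 \<le> q1 \<Longrightarrow> 0 \<le> q2 \<Longrightarrow> 0 \<le> q3 \<Longrightarrow>
      q0 + q1 + q2 + q3 = 1 \<Longrightarrow> x = q1 - q3 \<Longrightarrow> y = q2 + q3 / 2 \<Longrightarrow> (x, y) \<in> polygon quadV 4"
    using in_poly by blast
  have P: "(a, b) \<in> polygon quadV 4"
    by (rule inpoly[of "p 0" "p 1" "p 2" "p 3"]) (use pp f1 f2 f3 in auto)
  define r where "r = min (min (p 0) (p 1)) (p 2) / 2"
  have rp: "0 < r" using pp by (simp add: r_def)
  have "ball (a, b) r \<subseteq> polygon quadV 4"
  proof
    fix y assume y: "y \<in> ball (a, b) r"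
    obtain y1 y2 where yy: "y = (y1, y2)" by (cases y)
    have d1: "\<bar>y1 - a\<bar> < r" using dist_fst_le[of "(a,b)" y] y yy by (simp add: dist_real_def)
    have d2: "\<bar>y2 - b\<bar> < r" using dist_snd_le[of "(a,b)" y] y yy by (simp add: dist_real_def)
    have r0: "r \<le> p 0 / 2" "r \<le> p 1 / 2" "r \<le> p 2 / 2" by (auto simp: r_def)
    show "y \<in> polygon quadV 4" unfolding yy
      by (rule inpoly[of "p 0 - (y1 - a) - (y2 - b)" "p 1 + (y1 - a)" "p 2 + (y2 - b)" "p 3"])
         (use pp f1 f2 f3 d1 d2 r0 in \<open>auto simp: abs_less_iff\<close>)
  qed
  then have int: "(a, b) \<in> interior (polygon quadV 4)" using rp by (auto simp: mem_interior)
  have w: "wach_weight quadV 4 (a,b) 0 = 1 / (e3 * e0)"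
    "wach_weight quadV 4 (a,b) (Suc 0) = 2 / (e0 * e1)"
    "wach_weight quadV 4 (a,b) 2 = 3 / (e1 * e2)"
    "wach_weight quadV 4 (a,b) 3 = 2 / (e2 * e3)"
    using W[of b a] e0p e1p e2p e3p unfolding e0_def e1_def e2_def e3_def by simp_all
  have wsum: "(\<Sum>j<4. wach_weight quadV 4 (a,b) j) = U / (e0*e1*e2*e3)"
    using e0p e1p e2p e3p by (simp add: sum4 w U_def field_simps)
  have WP: "wachspress quadV 4 (a, b) i = p i" if "i < 4" for i
  proof -
    have "wachspress quadV 4 (a, b) i = wach_weight quadV 4 (a,b) i / (U / (e0*e1*e2*e3))"
      by (simp add: wachspress_def int wsum)
    then show ?thesis using i4[OF that] e0p e1p e2p e3p Up
      by (auto simp: w p_def field_simps)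
  qed
  show ?thesis using P G WP by simp
qed

lemma less_4_cases: "(i::nat) < 4 \<Longrightarrow> i = 0 \<or> i = 1 \<or> i = 2 \<or> i = 3" by auto

lemma cvx_le: "convex {y::real\<times>real. fst y \<le> c}"
proof -
  have "{x. inner (1::real, 0::real) x \<le> c} = {y::real\<times>real. fst y \<le> c}"
    by (auto simp: inner_prod_def)
  then show ?thesis using convex_halfspace_le[of "(1::real, 0::real)" c] by simp
qed

lemma cvx_ge: "convex {y::real\<times>real. c \<le> fst y}"
proof -
  have "{x. inner (1::real, 0::real) x \<ge> c} = {y::real\<times>real. c \<le> fst y}"
    by (auto simp: inner_prod_def)
  then show ?thesis using convex_halfspace_ge[of c "(1::real, 0::real)"] by simp
qed

lemma seg_le:
  fixes u w x :: "real \<times> real"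
  assumes "fst u \<le> c" "fst w \<le> c" "x \<in> closed_segment u w" shows "fst x \<le> (c::real)"
proof -
  have "convex hull {u, w} \<subseteq> {y. fst y \<le> c}"
    by (rule hull_minimal) (use assms cvx_le in auto)
  then show ?thesis using assms(3) by (auto simp: segment_convex_hull)
qed

lemma seg_ge:
  fixes u w x :: "real \<times> real"
  assumes "c \<le> fst u" "c \<le> fst w" "x \<in> closed_segment u w" shows "(c::real) \<le> fst x"
proof -
  have "convex hull {u, w} \<subseteq> {y. c \<le> fst y}"
    by (rule hull_minimal) (use assms cvx_ge in auto)
  then show ?thesis using assms(3) by (auto simp: segment_convex_hull)
qed

lemma quadV_fst: "-1 \<le> fst (quadV i) \<and> fst (quadV i) \<le> 1"
  by (simp add: quadV_def)

lemma poly_le: assumes "x \<in> polygon quadV 4" shows "fst x \<le> 1"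
proof -
  have "convex hull (quadV ` {0..<4}) \<subseteq> {y. fst y \<le> 1}"
    by (rule hull_minimal) (use quadV_fst cvx_le in auto)
  then show ?thesis using assms by (auto simp: polygon_def)
qed

lemma poly_ge: assumes "x \<in> polygon quadV 4" shows "-1 \<le> fst x"
proof -
  have "convex hull (quadV ` {0..<4}) \<subseteq> {y. -1 \<le> fst y}"
    by (rule hull_minimal) (use quadV_fst cvx_ge in auto)
  then show ?thesis using assms by (auto simp: polygon_def)
qed

lemma not_int1: "(1, 0) \<notin> interior (polygon quadV 4)"
proof
  assume "(1, 0) \<in> interior (polygon quadV 4)"
  then obtain e where e: "0 < e" "ball (1, 0) e \<subseteq> polygon quadV 4" by (auto simp: mem_interior)
  have "(1 + e/2, 0) \<in> ball (1::real, 0::real) e" using e by (simp add: dist_Pair_Pair dist_real_def)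
  then have "fst (1 + e/2, 0::real) \<le> 1" using e poly_le by blast
  then show False using e by simp
qed

lemma not_int3: "(-1, 1/2) \<notin> interior (polygon quadV 4)"
proof
  assume "(-1, 1/2) \<in> interior (polygon quadV 4)"
  then obtain e where e: "0 < e" "ball (-1, 1/2) e \<subseteq> polygon quadV 4" by (auto simp: mem_interior)
  have "(-1 - e/2, 1/2) \<in> ball (-1::real, 1/2::real) e" using e by (simp add: dist_Pair_Pair dist_real_def)
  then have "-1 \<le> fst (-1 - e/2, 1/2::real)" using e poly_ge by blast
  then show False using e by simp
qed

lemma gibbs_v1: "gibbs quadV 4 (1, 0) = (\<lambda>i. if i = 1 then 1 else 0)" (is "_ = ?d")
proof -
  have fd: "feasible quadV 4 (1, 0) ?d" by (simp add: feas_quad)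
  have un: "q = ?d" if "feasible quadV 4 (1, 0) q" for q
  proof -
    have h: "\<forall>i<4. 0 \<le> q i" "\<forall>i\<ge>4. q i = 0" "q 0 + q 1 + q 2 + q 3 = 1" "1 = q 1 - q 3" "0 = q 2 + q 3 / 2"
      using that by (auto simp: feas_quad)
    have "0 \<le> q 0" "0 \<le> q 1" "0 \<le> q 2" "0 \<le> q 3" using h(1) by auto
    then have v: "q 0 = 0" "q 1 = 1" "q 2 = 0" "q 3 = 0" using h(3-5) by linarith+
    show ?thesis
    proof
      fix i show "q i = ?d i"
        using v h(2) by (cases "i < 4") (auto dest!: less_4_cases)
    qed
  qed
  show ?thesis unfolding gibbs_def
  proof (rule the_equality)
    show "feasible quadV 4 (1, 0) ?d \<and> (\<forall>q. feasible quadV 4 (1, 0) q \<longrightarrow> entropy 4 q \<le> entropy 4 ?d)"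
      using fd un by blast
  next
    fix q assume "feasible quadV 4 (1, 0) q \<and> (\<forall>r. feasible quadV 4 (1, 0) r \<longrightarrow> entropy 4 r \<le> entropy 4 q)"
    then show "q = ?d" using un by blast
  qed
qed

lemma gibbs_v3: "gibbs quadV 4 (-1, 1/2) = (\<lambda>i. if i = 3 then 1 else 0)" (is "_ = ?d")
proof -
  have fd: "feasible quadV 4 (-1, 1/2) ?d" by (simp add: feas_quad)
  have un: "q = ?d" if "feasible quadV 4 (-1, 1/2) q" for q
  proof -
    have h: "\<forall>i<4. 0 \<le> q i" "\<forall>i\<ge>4. q i = 0" "q 0 + q 1 + q 2 + q 3 = 1" "-1 = q 1 - q 3" "1/2 = q 2 + q 3 / 2"
      using that by (auto simp: feas_quad)
    have "0 \<le> q 0" "0 \<le> q 1" "0 \<le> q 2" "0 \<le> q 3" using h(1) by auto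
    then have v: "q 0 = 0" "q 1 = 0" "q 2 = 0" "q 3 = 1" using h(3-5) by linarith+
    show ?thesis
    proof
      fix i show "q i = ?d i"
        using v h(2) by (cases "i < 4") (auto dest!: less_4_cases)
    qed
  qed
  show ?thesis unfolding gibbs_def
  proof (rule the_equality)
    show "feasible quadV 4 (-1, 1/2) ?d \<and> (\<forall>q. feasible quadV 4 (-1, 1/2) q \<longrightarrow> entropy 4 q \<le> entropy 4 ?d)"
      using fd un by blast
  next
    fix q assume "feasible quadV 4 (-1, 1/2) q \<and> (\<forall>r. feasible quadV 4 (-1, 1/2) r \<longrightarrow> entropy 4 r \<le> entropy 4 q)"
    then show "q = ?d" using un by blast
  qed
qed


theorem theorem5p10:
  fixes a b :: real
  assumes "-1 \<le> a" "a \<le> 1"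
    and "b = (-12 - 13*a + sqrt (25^2 + 11*13*(1 - a^2))) / (4*13)"
  shows "(a, b) \<in> polygon quadV 4 \<and>
         (\<forall>i<4. gibbs quadV 4 (a, b) i = wachspress quadV 4 (a, b) i)"
proof (cases "a = 1 \<or> a = -1")
  case False
  then show ?thesis using interior_case assms by auto
next
  case True
  then show ?thesis
  proof
    assume a: "a = 1"
    then have b: "b = 0" using assms(3) by simp
    have mem: "(1, 0) \<in> polygon quadV 4"
      unfolding polygon_def by (rule hull_inc) (auto simp: quadV_def image_iff intro!: bexI[of _ 1])
    have n1: "(1::real, 0::real) \<notin> closed_segment (0, 1) (-1, 1/2)"
      using seg_le[of "(0::real, 1::real)" 0 "(-1, 1/2)" "(1, 0)"] by auto
    have n2: "(1::real, 0::real) \<notin> closed_segment (-1, 1/2) (0, 0)"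
      using seg_le[of "(-1::real, 1/2::real)" 0 "(0, 0)" "(1, 0)"] by auto
    have "gibbs quadV 4 (1, 0) i = wachspress quadV 4 (1, 0) i" if "i < 4" for i
      using less_4_cases[OF that] n1 n2 not_int1
      by (auto simp: gibbs_v1 wachspress_def nxt_def prv_def quadV_def)
    then show ?thesis using mem a b by simp
  next
    assume a: "a = -1"
    then have b: "b = 1/2" using assms(3) by simp
    have mem: "(-1, 1/2) \<in> polygon quadV 4"
    proof -
      have "quadV 3 \<in> quadV ` {0..<4}" by simp
      then have "quadV 3 \<in> polygon quadV 4" unfolding polygon_def by (rule hull_inc)
      then show ?thesis by (simp add: quadV_def)
    qed
    have n1: "(-1::real, 1/2::real) \<notin> closed_segment (0, 0) (1, 0)"
      using seg_ge[of 0 "(0::real, 0::real)" "(1, 0)" "(-1, 1/2)"] by auto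
    have n2: "(-1::real, 1/2::real) \<notin> closed_segment (1, 0) (0, 1)"
      using seg_ge[of 0 "(1::real, 0::real)" "(0, 1)" "(-1, 1/2)"] by auto
    have "gibbs quadV 4 (-1, 1/2) i = wachspress quadV 4 (-1, 1/2) i" if "i < 4" for i
      using less_4_cases[OF that] n1 n2 not_int3
      by (auto simp: gibbs_v3 wachspress_def nxt_def prv_def quadV_def)
    then show ?thesis using mem unfolding a b by simp
  qed
qed

end
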